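(* Let $p$ be a probability distribution over $\{0,1\}^n$ and let $\gamma>0$. For every $\epsilon<\gamma/2$ the following holds: if the adapted ancestral sampling algorithm is given black-box access to real numbers $\pi(x_{1:k})$, for all $k\in[n]$ and all $x_{1:k}\in\{0,1\}^k$, satisfying $|\pi(x_{1:k})-p(x_{1:k})|\le \epsilon/2^k$, then it samples from a distribution $q$ with $$\|q-p\|_{\mathrm{TV}}\le \mathfrak{f}(\gamma)+\exp\!\left(\frac{4\epsilon n}{\gamma}\right)-1 .$$
   Context: For $x\in\{0,1\}^n$, $x_{1:k}=(x_1,\dots,x_k)$ and $p(x_{1:k})=\sum_{x_{k+1},\dots,x_n}p(x)$ is the marginal. Adapted ancestral sampling algorithm: given the estimates $\pi(\cdot)$, it produces $x$ bit by bit; at step $k$, with $x_{1:k-1}$ already fixed, let $a=\pi(x_{1:k-1},0)$ and $b=\pi(x_{1:k-1},1)$. If $a,b\ge0$, it sets $x_k=0$ with probability $a/(a+b)$ and $x_k=1$ otherwise; if one of $a,b$ is negative, it deterministically sets $x_k$ to the value whose estimate is non-negative. The output distribution is $q$. Define $S_\gamma=\{x\in\{0,1\}^n:\ p(x_{1:k})\ge\gamma/2^k\ \text{for all } k\in[n]\}$ and $\mathfrak{f}(\gamma)=1-\sum_{x\in S_\gamma}p(x)$. $\|\cdot\|_{\mathrm{TV}}$ is total variation distance. *)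

theory Defs
  imports "HOL-Analysis.Analysis"
begin

text \<open>Bit strings x \<in> {0,1}^n are modelled as bool lists of length n
  (False = 0, True = 1).\<close>

definition bitstrings :: "nat \<Rightarrow> bool list set" where
  "bitstrings n = {xs. length xs = n}"

definition is_distribution :: "nat \<Rightarrow> (bool list \<Rightarrow> real) \<Rightarrow> bool" where
  "is_distribution n p \<longleftrightarrow> (\<forall>x\<in>bitstrings n. p x \<ge> 0) \<and> (\<Sum>x\<in>bitstrings n. p x) = 1"

definition marginal :: "nat \<Rightarrow> (bool list \<Rightarrow> real) \<Rightarrow> bool list \<Rightarrow> real" where
  "marginal n p u = (\<Sum>y\<in>bitstrings (n - length u). p (u @ y))"

text \<open>In the cases not specified by
  the algorithm (both estimates negative, or both zero) the behaviour is
  arbitrary: the next bit is 0 with probability c u, where c is an arbitrary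
  function with values in [0,1].\<close>
definition step_prob :: "(bool list \<Rightarrow> real) \<Rightarrow> (bool list \<Rightarrow> real) \<Rightarrow> bool list \<Rightarrow> bool \<Rightarrow> real" where
  "step_prob \<pi> c u v =
     (let a = \<pi> (u @ [False]); b = \<pi> (u @ [True]);
          prob0 = (if a \<ge> 0 \<and> b \<ge> 0 \<and> a + b > 0 then a / (a + b)
                   else if a \<ge> 0 \<and> b < 0 then 1
                   else if a < 0 \<and> b \<ge> 0 then 0
                   else c u)
      in if v then 1 - prob0 else prob0)"

definition sampler_dist :: "(bool list \<Rightarrow> real) \<Rightarrow> (bool list \<Rightarrow> real) \<Rightarrow> bool list \<Rightarrow> real" where
  "sampler_dist \<pi> c x = (\<Prod>k<length x. step_prob \<pi> c (take k x) (x ! k))"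

definition S_gamma :: "nat \<Rightarrow> (bool list \<Rightarrow> real) \<Rightarrow> real \<Rightarrow> bool list set" where
  "S_gamma n p \<gamma> = {x\<in>bitstrings n. \<forall>k\<in>{1..n}. marginal n p (take k x) \<ge> \<gamma> / 2 ^ k}"

definition frak_f :: "nat \<Rightarrow> (bool list \<Rightarrow> real) \<Rightarrow> real \<Rightarrow> real" where
  "frak_f n p \<gamma> = 1 - (\<Sum>x\<in>S_gamma n p \<gamma>. p x)"

definition tv_dist :: "nat \<Rightarrow> (bool list \<Rightarrow> real) \<Rightarrow> (bool list \<Rightarrow> real) \<Rightarrow> real" where
  "tv_dist n q p = (1/2) * (\<Sum>x\<in>bitstrings n. \<bar>q x - p x\<bar>)"

end

theory Submission
  imports Defs
begin

lemma bs_Suc: "bitstrings (Suc m) = Cons False ` bitstrings m \<union> Cons True ` bitstrings m"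
  unfolding bitstrings_def
proof (intro equalityI subsetI)
  fix x :: "bool list" assume "x \<in> {xs. length xs = Suc m}"
  then obtain b y where "x = b # y" "length y = m" by (auto simp: length_Suc_conv)
  then show "x \<in> Cons False ` {xs. length xs = m} \<union> Cons True ` {xs. length xs = m}"
    by (cases b) auto
qed auto

lemma bs_Suc': "bitstrings (Suc m) = (\<lambda>x. x @ [False]) ` bitstrings m \<union> (\<lambda>x. x @ [True]) ` bitstrings m"
  unfolding bitstrings_def
proof (intro equalityI subsetI)
  fix x :: "bool list" assume "x \<in> {xs. length xs = Suc m}"
  then obtain b y where "x = y @ [b]" "length y = m"
    by (metis (mono_tags, lifting) length_append_singleton mem_Collect_eq nat.inject rev_exhaust list.size(3) nat.distinct(1))
  then show "x \<in> (\<lambda>x. x @ [False]) ` {xs. length xs = m} \<union> (\<lambda>x. x @ [True]) ` {xs. length xs = m}"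
    by (cases b) auto
qed auto

lemma bs_0: "bitstrings 0 = {[]}" unfolding bitstrings_def by auto

lemma bs_finite: "finite (bitstrings m)"
  by (induct m) (auto simp: bs_Suc bs_0)

lemma sum_bs_Suc: "(\<Sum>y\<in>bitstrings (Suc m). f y) = (\<Sum>y\<in>bitstrings m. f (False # y)) + (\<Sum>y\<in>bitstrings m. f (True # y))"
  unfolding bs_Suc
  by (subst sum.union_disjoint) (auto simp: bs_finite sum.reindex)

lemma sum_bs_Suc': "(\<Sum>y\<in>bitstrings (Suc m). f y) = (\<Sum>y\<in>bitstrings m. f (y @ [False])) + (\<Sum>y\<in>bitstrings m. f (y @ [True]))"
  unfolding bs_Suc'
  by (subst sum.union_disjoint) (auto simp: bs_finite sum.reindex inj_on_def)

lemma marginal_split: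
  assumes "length u < n"
  shows "marginal n p u = marginal n p (u @ [False]) + marginal n p (u @ [True])"
proof -
  have e: "n - length u = Suc (n - length u - 1)" using assms by simp
  show ?thesis unfolding marginal_def
    by (subst e, subst sum_bs_Suc) simp
qed

lemma marginal_nonneg:
  assumes "is_distribution n p" "length u \<le> n"
  shows "marginal n p u \<ge> 0"
  unfolding marginal_def
  using assms by (intro sum_nonneg) (auto simp: is_distribution_def bitstrings_def)

lemma marginal_full:
  assumes "length x = n" shows "marginal n p x = p x"
  using assms by (simp add: marginal_def bs_0)

lemma marginal_empty:
  assumes "is_distribution n p" shows "marginal n p [] = 1"
  using assms by (simp add: marginal_def is_distribution_def)

lemma sampler_snoc: "sampler_dist \<pi> c (x @ [b]) = sampler_dist \<pi> c x * step_prob \<pi> c x b"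
proof -
  have "(\<Prod>k<length x. step_prob \<pi> c (take k (x @ [b])) ((x @ [b]) ! k))
      = (\<Prod>k<length x. step_prob \<pi> c (take k x) (x ! k))"
    by (intro prod.cong) (auto simp: nth_append)
  then show ?thesis unfolding sampler_dist_def by simp
qed

lemma step_prob_sum: "step_prob \<pi> c u False + step_prob \<pi> c u True = 1"
  unfolding step_prob_def Let_def by simp

lemma step_prob_nonneg:
  assumes "c u \<in> {0..1}"
  shows "step_prob \<pi> c u v \<ge> 0"
  using assms unfolding step_prob_def Let_def
  by (auto simp: divide_le_eq_1 field_simps)

lemma sampler_nonneg:
  assumes "\<And>u. c u \<in> {0..1}"
  shows "sampler_dist \<pi> c x \<ge> 0"
  unfolding sampler_dist_def using assms step_prob_nonneg by (intro prod_nonneg) auto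

lemma sampler_sum: "(\<Sum>x\<in>bitstrings m. sampler_dist \<pi> c x) = 1"
proof (induct m)
  case 0 then show ?case by (simp add: bs_0 sampler_dist_def)
next
  case (Suc m)
  have "(\<Sum>x\<in>bitstrings (Suc m). sampler_dist \<pi> c x)
     = (\<Sum>x\<in>bitstrings m. sampler_dist \<pi> c x * (step_prob \<pi> c x False + step_prob \<pi> c x True))"
    unfolding sum_bs_Suc' sampler_snoc by (simp add: sum.distrib[symmetric] algebra_simps)
  also have "\<dots> = 1" using Suc by (simp add: step_prob_sum)
  finally show ?case .
qed


lemma exp_bound1:
  fixes t :: real assumes "0 \<le> t" "t \<le> 1/2"
  shows "exp (-2*t) \<le> 1 - t"
proof -
  have "-t - 2*t^2 \<le> ln (1 - t)" using ln_one_minus_pos_lower_bound assms by blast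
  moreover have "t*t \<le> t*(1/2)" using assms by (intro mult_left_mono) auto
  then have "-2*t \<le> -t - 2*t^2" by (simp add: power2_eq_square)
  ultimately have "-2*t \<le> ln (1 - t)" by linarith
  then have "exp (-2*t) \<le> exp (ln (1 - t))" by simp
  also have "\<dots> = 1 - t" using assms by simp
  finally show ?thesis .
qed

lemma exp_bound2:
  fixes t :: real assumes "0 \<le> t"
  shows "exp (-2*t) * (1 + 2*t) \<le> 1"
proof -
  have "1 + 2*t \<le> exp (2*t)" using exp_ge_add_one_self[of "2*t"] by simp
  then have "exp (-2*t) * (1 + 2*t) \<le> exp (-2*t) * exp (2*t)" by (simp)
  also have "\<dots> = 1" by (simp add: exp_add[symmetric])
  finally show ?thesis .
qed

lemma step_bound:
  fixes M N e g t A B :: real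
  assumes "0 \<le> N" "g > 0" "M \<ge> g" "e = t*g" "0 \<le> t" "t < 1/2"
    "A \<ge> M - e" "B \<le> N + e" "B \<ge> 0"
  shows "exp (-4*t) * M \<le> A / (A + B) * (M + N)"
proof -
  have e0: "e \<ge> 0" using assms by simp
  have eM: "e \<le> t * M" using assms by (simp add: mult_left_mono)
  have "t * M \<le> (1/2) * M" using assms by (intro mult_right_mono) auto
  then have Me: "M - e > 0" using assms eM by linarith
  have Apos: "A > 0" using Me assms by linarith
  have "(M - e) * (A + B) \<le> A * (M + N + 2*e)"
  proof -
    have "(M - e) * B \<le> (M - e) * (N + e)" using Me assms by (intro mult_left_mono) auto
    also have "\<dots> \<le> A * (N + e)" using assms Me by (intro mult_right_mono) auto
    finally have "(M - e) * B \<le> A * (N + e)" .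
    moreover have "A * (M - e) \<le> A * (M + e)" using Apos assms
      by (intro mult_left_mono) (auto intro: mult_nonneg_nonneg)
    then have "(M - e) * A \<le> A * (M + e)" by (simp add: mult.commute)
    ultimately show ?thesis by (simp add: algebra_simps)
  qed
  have den: "M + N + 2*e > 0" using Me e0 assms by linarith
  have r1: "(M - e) / (M + N + 2*e) \<le> A / (A + B)"
    using \<open>(M - e) * (A + B) \<le> A * (M + N + 2*e)\<close> den Apos assms
    by (simp add: divide_simps)
  have E: "exp (-4*t) = exp (-2*t) * exp (-2*t)" by (simp add: exp_add[symmetric])
  have b1: "exp (-2*t) \<le> 1 - t" using exp_bound1 assms by simp
  have b2: "exp (-2*t) * (1 + 2*t) \<le> 1" using exp_bound2 assms by simp
  have "exp (-4*t) * M * (1 + 2*t) \<le> (1 - t) * M"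
  proof -
    have "exp (-4*t) * M * (1 + 2*t) = exp (-2*t) * M * (exp (-2*t) * (1 + 2*t))" using E by simp
    also have "\<dots> \<le> exp (-2*t) * M" using b2 assms by (intro mult_left_le) auto
    also have "\<dots> \<le> (1 - t) * M" using b1 assms by (intro mult_right_mono) auto
    finally show ?thesis .
  qed
  moreover have "(1 - t) * M * (M + N + 2*e) \<le> (M - e) * (M + N) * (1 + 2*t)"
  proof -
    have "(1 - t) * M * (M + N + 2*e) \<le> (1 - t) * M * (M + N + 2*t*(M+N))"
    proof (intro mult_left_mono)
      have "t * M \<le> t * (M + N)" using assms by (intro mult_left_mono) auto
      then show "M + N + 2*e \<le> M + N + 2*t*(M+N)" using eM by linarith
      show "0 \<le> (1 - t) * M" using assms by (intro mult_nonneg_nonneg) auto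
    qed
    also have "\<dots> = (M - t*M) * (M + N) * (1 + 2*t)" by (simp add: algebra_simps)
    also have "\<dots> \<le> (M - e) * (M + N) * (1 + 2*t)"
      using eM assms by (intro mult_right_mono) auto
    finally show ?thesis .
  qed
  ultimately have "exp (-4*t) * M * (1 + 2*t) * (M + N + 2*e) \<le> (M - e) * (M + N) * (1 + 2*t)"
    using den by (smt (verit, best) mult_right_mono)
  then have "exp (-4*t) * M * (M + N + 2*e) \<le> (M - e) * (M + N)"
    using assms by (smt (verit) mult.commute mult.left_commute mult_le_cancel_left_pos)
  then have "exp (-4*t) * M \<le> (M - e) / (M + N + 2*e) * (M + N)"
    using den by (simp add: divide_simps)
  also have "\<dots> \<le> A / (A + B) * (M + N)"
    using r1 assms by (intro mult_right_mono) auto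
  finally show ?thesis .
qed


lemma step_prob_neg:
  assumes "\<pi> (u @ [v]) > 0" "\<pi> (u @ [\<not> v]) < 0"
  shows "step_prob \<pi> c u v = 1"
  using assms by (cases v) (auto simp: step_prob_def Let_def)

lemma step_prob_pos:
  assumes "\<pi> (u @ [v]) > 0" "\<pi> (u @ [\<not> v]) \<ge> 0"
  shows "step_prob \<pi> c u v = \<pi> (u @ [v]) / (\<pi> (u @ [v]) + \<pi> (u @ [\<not> v]))"
  using assms by (cases v) (auto simp: step_prob_def Let_def field_simps)

lemma per_step:
  assumes dist: "is_distribution n p"
    and g: "\<gamma> > 0"
    and eg: "\<epsilon> < \<gamma> / 2"
    and cc: "\<And>u. c u \<in> {0 .. 1}"
    and app: "\<And>u. length u \<in> {1..n} \<Longrightarrow> \<bar>\<pi> u - marginal n p u\<bar> \<le> \<epsilon> / 2 ^ length u"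
    and len: "length u = k" "k < n"
    and big: "marginal n p (u @ [v]) \<ge> \<gamma> / 2 ^ Suc k"
  shows "exp (-4 * (\<epsilon> / \<gamma>)) * marginal n p (u @ [v]) \<le> step_prob \<pi> c u v * marginal n p u"
proof -
  define M where "M = marginal n p (u @ [v])"
  define N where "N = marginal n p (u @ [\<not> v])"
  define e where "e = \<epsilon> / 2 ^ Suc k"
  define gg where "gg = \<gamma> / 2 ^ Suc k"
  define t where "t = \<epsilon> / \<gamma>"
  define A where "A = \<pi> (u @ [v])"
  define B where "B = \<pi> (u @ [\<not> v])"
  have N0: "N \<ge> 0" unfolding N_def using marginal_nonneg[OF dist] len by simp
  have MN: "marginal n p u = M + N"
    unfolding M_def N_def using marginal_split[of u n p] len by (cases v) auto
  have aA: "\<bar>A - M\<bar> \<le> e" unfolding A_def M_def e_def using app[of "u @ [v]"] len by simp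
  have aB: "\<bar>B - N\<bar> \<le> e" unfolding B_def N_def e_def using app[of "u @ [\<not> v]"] len by simp
  have e0: "e \<ge> 0" using aA by linarith
  then have eps0: "\<epsilon> \<ge> 0" unfolding e_def by (simp add: zero_le_divide_iff) (smt (verit) zero_less_power)
  have gg0: "gg > 0" unfolding gg_def using g by simp
  have et: "e = t * gg" unfolding e_def t_def gg_def using g by simp
  have t0: "0 \<le> t" unfolding t_def using eps0 g by simp
  have t1: "t < 1/2" unfolding t_def using eg g by (simp add: divide_simps)
  have Mg: "M \<ge> gg" unfolding M_def gg_def using big by simp
  have "t * gg < gg" using t1 gg0 by simp
  then have Apos: "A > 0" using aA Mg et by linarith
  have E1: "exp (-4 * t) \<le> 1" using t0 by simp
  show ?thesis
  proof (cases "B < 0")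
    case True
    then have "step_prob \<pi> c u v = 1" using step_prob_neg Apos unfolding A_def B_def by blast
    moreover have "exp (-4 * t) * M \<le> M" using E1 Mg gg0 by (intro mult_left_le_one_le) auto
    ultimately show ?thesis using MN N0 unfolding t_def M_def by simp
  next
    case False
    then have "step_prob \<pi> c u v = A / (A + B)" using step_prob_pos Apos unfolding A_def B_def by simp
    moreover have "exp (-4*t) * M \<le> A / (A + B) * (M + N)"
      by (rule step_bound[OF N0 gg0 Mg et t0 t1]) (use aA aB False in auto)
    ultimately show ?thesis using MN unfolding t_def M_def by simp
  qed
qed


lemma prod_bound:
  assumes dist: "is_distribution n p"
    and g: "\<gamma> > 0"
    and eg: "\<epsilon> < \<gamma> / 2"
    and cc: "\<And>u. c u \<in> {0 .. 1}"
    and app: "\<And>u. length u \<in> {1..n} \<Longrightarrow> \<bar>\<pi> u - marginal n p u\<bar> \<le> \<epsilon> / 2 ^ length u"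
    and xS: "x \<in> S_gamma n p \<gamma>"
  shows "j \<le> n \<Longrightarrow> exp (-4 * (\<epsilon> / \<gamma>) * real j) * marginal n p (take j x)
            \<le> (\<Prod>k<j. step_prob \<pi> c (take k x) (x ! k))"
proof (induct j)
  case 0
  then show ?case using marginal_empty[OF dist] by simp
next
  case (Suc j)
  have lx: "length x = n" and big: "\<And>k. k \<in> {1..n} \<Longrightarrow> marginal n p (take k x) \<ge> \<gamma> / 2 ^ k"
    using xS unfolding S_gamma_def bitstrings_def by auto
  have jn: "j < n" using Suc by simp
  have tk: "take (Suc j) x = take j x @ [x ! j]" using jn lx by (simp add: take_Suc_conv_app_nth)
  define r where "r = step_prob \<pi> c (take j x) (x ! j)"
  have r0: "r \<ge> 0" unfolding r_def using step_prob_nonneg cc by blast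
  have ps: "exp (-4 * (\<epsilon> / \<gamma>)) * marginal n p (take (Suc j) x) \<le> r * marginal n p (take j x)"
    unfolding r_def tk
    by (rule per_step[OF dist g eg cc app]) (use jn lx big[of "Suc j"] tk in auto)
  have "exp (-4 * (\<epsilon> / \<gamma>) * real (Suc j)) * marginal n p (take (Suc j) x)
      = exp (-4 * (\<epsilon> / \<gamma>) * real j) * (exp (-4 * (\<epsilon> / \<gamma>)) * marginal n p (take (Suc j) x))"
  proof -
    have aa: "\<And>a::real. a * real (Suc j) = a * real j + a" by (simp add: algebra_simps)
    have "-4 * (\<epsilon> / \<gamma>) * real (Suc j) = -4 * (\<epsilon> / \<gamma>) * real j + -4 * (\<epsilon> / \<gamma>)"
      by (rule aa)
    then show ?thesis by (simp only: exp_add mult.assoc)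
  qed
  also have "\<dots> \<le> exp (-4 * (\<epsilon> / \<gamma>) * real j) * (r * marginal n p (take j x))"
    using ps by (intro mult_left_mono) auto
  also have "\<dots> = r * (exp (-4 * (\<epsilon> / \<gamma>) * real j) * marginal n p (take j x))" by simp
  also have "\<dots> \<le> r * (\<Prod>k<j. step_prob \<pi> c (take k x) (x ! k))"
    using Suc jn r0 by (intro mult_left_mono) auto
  also have "\<dots> = (\<Prod>k<Suc j. step_prob \<pi> c (take k x) (x ! k))"
    unfolding r_def by (simp add: mult.commute)
  finally show ?case .
qed

theorem theorem7:
  fixes n :: nat and p \<pi> c :: "bool list \<Rightarrow> real" and \<gamma> \<epsilon> :: real
  assumes "is_distribution n p"
    and "\<gamma> > 0"
    and "\<epsilon> < \<gamma> / 2"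
    and "\<And>u. c u \<in> {0 .. 1}"
    and "\<And>u. length u \<in> {1..n} \<Longrightarrow> \<bar>\<pi> u - marginal n p u\<bar> \<le> \<epsilon> / 2 ^ length u"
  shows "tv_dist n (sampler_dist \<pi> c) p \<le> frak_f n p \<gamma> + exp (4 * \<epsilon> * n / \<gamma>) - 1"
proof -
  note dist = assms(1) and g = assms(2) and eg = assms(3) and cc = assms(4) and app = assms(5)
  define q where "q = sampler_dist \<pi> c"
  define E where "E = exp (-4 * (\<epsilon> / \<gamma>) * real n)"
  define S where "S = S_gamma n p \<gamma>"
  define B where "B = bitstrings n"
  have fin: "finite B" unfolding B_def by (rule bs_finite)
  have SB: "S \<subseteq> B" unfolding S_def B_def S_gamma_def by auto
  have p0: "\<And>x. x \<in> B \<Longrightarrow> p x \<ge> 0" using dist unfolding is_distribution_def B_def by auto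
  have p1: "(\<Sum>x\<in>B. p x) = 1" using dist unfolding is_distribution_def B_def by auto
  have q0: "\<And>x. q x \<ge> 0" unfolding q_def using sampler_nonneg cc by blast
  have q1: "(\<Sum>x\<in>B. q x) = 1" unfolding q_def B_def by (rule sampler_sum)
  have en: "\<epsilon> * real n \<ge> 0"
  proof (cases "n = 0")
    case False
    have "0 \<le> \<epsilon> / 2 ^ length [False]"
      using app[of "[False]"] False by (intro order_trans[OF abs_ge_zero]) auto
    then have "\<epsilon> \<ge> 0" by simp
    then show ?thesis by simp
  qed simp
  have E0: "E > 0" unfolding E_def by simp
  have E1: "E \<le> 1" unfolding E_def using en g
    by (simp add: mult_nonneg_nonneg divide_nonneg_pos)
  have Einv: "exp (4 * \<epsilon> * n / \<gamma>) = 1 / E"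
  proof -
    have h: "-4 * (\<epsilon> / \<gamma>) * real n = -(4 * \<epsilon> * real n / \<gamma>)" by simp
    show ?thesis unfolding E_def h exp_minus by (simp add: divide_inverse)
  qed
  have qS: "\<And>x. x \<in> S \<Longrightarrow> E * p x \<le> q x"
  proof -
    fix x assume xS: "x \<in> S"
    then have lx: "length x = n" unfolding S_def S_gamma_def bitstrings_def by auto
    have "E * marginal n p (take n x) \<le> (\<Prod>k<n. step_prob \<pi> c (take k x) (x ! k))"
      unfolding E_def by (rule prod_bound[OF dist g eg cc app]) (use xS S_def in auto)
    then show "E * p x \<le> q x" unfolding q_def sampler_dist_def using lx marginal_full[of x n p]
      by simp
  qed
  have absq: "\<And>x. \<bar>q x - p x\<bar> = (q x - p x) + 2 * max 0 (p x - q x)" by (auto simp: abs_if max_def)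
  have "(\<Sum>x\<in>B. \<bar>q x - p x\<bar>) = (\<Sum>x\<in>B. q x) - (\<Sum>x\<in>B. p x) + 2 * (\<Sum>x\<in>B. max 0 (p x - q x))"
    unfolding absq by (simp add: sum.distrib sum_subtractf sum_distrib_left)
  then have tv: "tv_dist n q p = (\<Sum>x\<in>B. max 0 (p x - q x))"
    unfolding tv_dist_def B_def[symmetric] using p1 q1 by simp
  have "(\<Sum>x\<in>B. max 0 (p x - q x)) = (\<Sum>x\<in>S. max 0 (p x - q x)) + (\<Sum>x\<in>B - S. max 0 (p x - q x))"
    using fin SB by (metis add.commute sum.subset_diff)
  also have "\<dots> \<le> (\<Sum>x\<in>S. (1 - E) * p x) + (\<Sum>x\<in>B - S. p x)"
  proof (intro add_mono sum_mono)
    fix x assume "x \<in> S"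
    then show "max 0 (p x - q x) \<le> (1 - E) * p x"
    proof -
      have px: "p x \<ge> 0" using p0 SB \<open>x \<in> S\<close> by auto
      have "E * p x \<le> p x" using px E1 E0 by (intro mult_left_le_one_le) auto
      then show ?thesis using qS[of x] \<open>x \<in> S\<close> px by (auto simp: max_def algebra_simps)
    qed
  next
    fix x assume "x \<in> B - S"
    then show "max 0 (p x - q x) \<le> p x" using q0[of x] p0[of x] by auto
  qed
  also have "\<dots> = (1 - E) * (\<Sum>x\<in>S. p x) + (1 - (\<Sum>x\<in>S. p x))"
    using fin SB p1 by (simp add: sum_distrib_left sum_diff finite_subset)
  finally have tvb: "tv_dist n q p \<le> (1 - E) * (\<Sum>x\<in>S. p x) + (1 - (\<Sum>x\<in>S. p x))" using tv by simp
  have PS0: "(\<Sum>x\<in>S. p x) \<ge> 0" using SB p0 by (intro sum_nonneg) auto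
  have PS1: "(\<Sum>x\<in>S. p x) \<le> 1" using p1 fin SB p0 by (metis sum_mono2 Diff_iff)
  have ff: "frak_f n p \<gamma> = 1 - (\<Sum>x\<in>S. p x)" unfolding frak_f_def S_def by simp
  have "(1 - E) * (\<Sum>x\<in>S. p x) \<le> 1 - E" using E1 PS1 by (simp add: mult_left_le)
  also have "1 - E \<le> 1 / E - 1"
  proof -
    have "E * (1 - E) \<le> 1 - E" using E0 E1 by (simp add: mult_left_le_one_le)
    then show ?thesis using E0 by (simp add: field_simps)
  qed
  finally have "tv_dist n q p \<le> frak_f n p \<gamma> + (1 / E - 1)" using tvb ff by linarith
  then show ?thesis unfolding q_def Einv by simp
qed

end
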